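(* Let $I\subset[0,\infty)$ be an interval, let $a,b\in I^\circ$ with $a<b$, and let $f:I\to\mathbb{R}$ be twice differentiable on $I^\circ$ with $f''\in L^1([a,b])$. Let $q>1$ and $p=\frac{q}{q-1}$, and assume $|f''|^q$ is $h$-convex on $[a,b]$. Then $$\left|\frac{f(a)+f(b)}{2}-\frac{1}{b-a}\int_a^b f(x)\,dx\right|\le \frac{(b-a)^2}{16\cdot 2^{1/p}}\,\beta^{1/p}\Big(\frac12,p+1\Big)\Big(\int_0^1 h(t)\,dt\Big)^{1/q}\left[\Big(|f''(a)|^q+\Big|f''\Big(\tfrac{a+b}{2}\Big)\Big|^q\Big)^{1/q}+\Big(|f''(b)|^q+\Big|f''\Big(\tfrac{a+b}{2}\Big)\Big|^q\Big)^{1/q}\right].$$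
   Context: Let $J$ be an interval with $(0,1)\subseteq J$ and $h:J\to\mathbb{R}$ a non-negative function, not identically zero, which is Lebesgue integrable on $(0,1)$. A non-negative function $g$ defined on an interval $K$ is called $h$-convex on $K$ if for all $x,y\in K$ and all $t\in(0,1)$: $g(tx+(1-t)y)\le h(t)g(x)+h(1-t)g(y)$. The Beta function is $\beta(u,v)=\int_0^1 t^{u-1}(1-t)^{v-1}dt$ for $u,v>0$. $I^\circ$ denotes the interior of $I$. *)

theory Defs
  imports "HOL-Analysis.Analysis"
begin

definition h_convex_on :: "(real \<Rightarrow> real) \<Rightarrow> real set \<Rightarrow> (real \<Rightarrow> real) \<Rightarrow> bool" where
  "h_convex_on h K g \<longleftrightarrow> (\<forall>x\<in>K. 0 \<le> g x) \<and>
     (\<forall>x\<in>K. \<forall>y\<in>K. \<forall>t\<in>{0<..<1}. g (t * x + (1 - t) * y) \<le> h t * g x + h (1 - t) * g y)"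

definition Beta_fun :: "real \<Rightarrow> real \<Rightarrow> real" where
  "Beta_fun u v = (\<integral>t\<in>{0<..<1}. t powr (u - 1) * (1 - t) powr (v - 1) \<partial>lborel)"

end

theory Submission
  imports Defs
begin


lemma holder_young:
  fixes X G w :: "real \<Rightarrow> real" and S :: "real set" and p q :: real
  assumes q: "q > 1" and p: "p = q/(q-1)"
    and XG_int: "(\<lambda>s. X s * G s) integrable_on S"
    and Xp_int: "(\<lambda>s. X s powr p) integrable_on S"
    and w_int: "w integrable_on S"
    and X0: "\<And>s. s\<in>S \<Longrightarrow> 0 \<le> X s" and G0: "\<And>s. s\<in>S \<Longrightarrow> 0 \<le> G s"
    and Gw: "\<And>s. s\<in>S \<Longrightarrow> G s powr q \<le> w s"
    and Cpos: "integral S (\<lambda>s. X s powr p) > 0"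
  shows "integral S (\<lambda>s. X s * G s) \<le> integral S (\<lambda>s. X s powr p) powr (1/p) * integral S w powr (1/q)"
proof -
  define P where "P = integral S (\<lambda>s. X s powr p)"
  define W where "W = integral S w"
  define I where "I = integral S (\<lambda>s. X s * G s)"
  have p1: "p > 1" using q unfolding p by (simp add: less_divide_eq)
  have pq: "1/p + 1/q = 1" using q unfolding p by (simp add: field_simps)
  have P0: "P > 0" using Cpos P_def by simp
  have W0: "W \<ge> 0" unfolding W_def
    by (rule integral_nonneg[OF w_int]) (meson G0 Gw order_trans powr_ge_zero)
  have key: "I \<le> P powr (1/p) * Q powr (1/q) * (1/p + W/(q*Q))" if Q: "Q > 0" for Q
  proof -
    define c1 where "c1 = P powr (1/p) * Q powr (1/q) / (p*P)"
    define c2 where "c2 = P powr (1/p) * Q powr (1/q) / (q*Q)"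
    have pt: "X s * G s \<le> c1 * X s powr p + c2 * w s" if s: "s \<in> S" for s
    proof -
      have A: "0 < P powr (1/p)" "0 < Q powr (1/q)" using P0 Q by auto
      have y: "(X s / P powr (1/p)) * (G s / Q powr (1/q)) \<le> (X s / P powr (1/p)) powr p / p + (G s / Q powr (1/q)) powr q / q"
        by (rule Youngs_inequality) (use p1 q pq X0[OF s] G0[OF s] A in auto)
      have e1: "(X s / P powr (1/p)) powr p = X s powr p / P"
        using A P0 p1 X0[OF s] by (simp add: powr_divide powr_powr)
      have e2: "(G s / Q powr (1/q)) powr q = G s powr q / Q"
        using A Q q G0[OF s] by (simp add: powr_divide powr_powr)
      have "X s * G s = P powr (1/p) * Q powr (1/q) * ((X s / P powr (1/p)) * (G s / Q powr (1/q)))"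
        using A by (simp add: field_simps)
      also have "\<dots> \<le> P powr (1/p) * Q powr (1/q) * (X s powr p / P / p + G s powr q / Q / q)"
        using y e1 e2 A by (intro mult_left_mono) auto
      also have "\<dots> \<le> P powr (1/p) * Q powr (1/q) * (X s powr p / P / p + w s / Q / q)"
        using Gw[OF s] A Q q by (intro mult_left_mono add_left_mono divide_right_mono) auto
      also have "\<dots> = c1 * X s powr p + c2 * w s" unfolding c1_def c2_def
        by (simp add: field_simps)
      finally show ?thesis .
    qed
    have "I \<le> integral S (\<lambda>s. c1 * X s powr p + c2 * w s)"
      unfolding I_def
      by (rule integral_le[OF XG_int]) (use pt integrable_cmul[OF Xp_int, of c1] integrable_cmul[OF w_int, of c2] in \<open>auto intro!: integrable_add\<close>)
    also have "\<dots> = c1 * P + c2 * W"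
      using integrable_cmul[OF Xp_int, of c1] integrable_cmul[OF w_int, of c2] by (simp add: integral_add P_def W_def)
    also have "\<dots> = P powr (1/p) * Q powr (1/q) * (1/p + W/(q*Q))"
      unfolding c1_def c2_def using P0 Q p1 q by (simp add: field_simps)
    finally show ?thesis .
  qed
  show ?thesis
  proof (cases "W > 0")
    case True
    from key[OF True] True pq show ?thesis unfolding I_def P_def W_def by simp
  next
    case False
    then have W: "W = 0" using W0 by simp
    have "I \<le> 0"
    proof (rule ccontr)
      assume "\<not> I \<le> 0"
      then have I0: "I > 0" by simp
      define Q where "Q = (I / P powr (1/p)) powr q"
      have Q0: "Q > 0" using I0 P0 Q_def by simp
      have "Q powr (1/q) = I / P powr (1/p)" unfolding Q_def using I0 P0 q by (simp add: powr_powr)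
      with key[OF Q0] W P0 have "I \<le> I / p" by simp
      with I0 p1 show False by (simp add: field_simps)
    qed
    then show ?thesis using W unfolding I_def P_def W_def by simp
  qed
qed


lemma beta_sub:
  fixes p :: real assumes p: "p > 0"
  shows "((\<lambda>s. (1 - s^2) powr p) has_integral Beta (1/2) (p+1) / 2) {0..1}"
proof -
  define f where "f = (\<lambda>s::real. (1 - s^2) powr p)"
  have fc: "continuous_on {0..1} f" unfolding f_def
    using p by (intro continuous_on_powr' continuous_intros) (auto intro: power_le_one)
  have "((\<lambda>x. (inverse (sqrt x) / 2) *\<^sub>R f (sqrt x)) has_integral (integral {sqrt 0..sqrt 1} f)) {0..1}"
  proof (rule has_integral_substitution_strong[where s="{0}" and c=0 and d=1])
    show "sqrt ` {0..1} \<subseteq> {0..1}" by auto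
    show "continuous_on {0..1} sqrt" by (intro continuous_intros)
    fix x :: real assume "x \<in> {0..1} - {0}"
    then have "x > 0" by auto
    then show "(sqrt has_field_derivative inverse (sqrt x) / 2) (at x within {0..1})"
      using DERIV_real_sqrt[of x] DERIV_subset by blast
  qed (use fc in auto)
  then have "((\<lambda>x. (inverse (sqrt x) / 2) *\<^sub>R f (sqrt x)) has_integral (integral {0..1} f)) {0<..<1}"
    by (simp add: has_integral_Icc_iff_Ioo)
  also have "?this \<longleftrightarrow> ((\<lambda>x. (1/2) * (x powr (1/2 - 1) * (1 - x) powr (p + 1 - 1))) has_integral (integral {0..1} f)) {0<..<1}"
  proof (rule has_integral_cong)
    fix x :: real assume x: "x \<in> {0<..<1}"
    have "x powr (1/2 - 1) = inverse (sqrt x)"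
      proof -
      have "x powr (1/2 - 1) = x powr (- (1/2))" by simp
      also have "\<dots> = inverse (x powr (1/2))" by (rule powr_minus)
      also have "\<dots> = inverse (sqrt x)" using x by (simp add: powr_half_sqrt)
      finally show ?thesis .
    qed
    then show "(inverse (sqrt x) / 2) *\<^sub>R f (sqrt x) = (1/2) * (x powr (1/2 - 1) * (1 - x) powr (p + 1 - 1))"
      using x by (simp add: f_def)
  qed
  finally have A: "((\<lambda>x. (1/2) * (x powr (1/2 - 1) * (1 - x) powr (p + 1 - 1))) has_integral (integral {0..1} f)) {0<..<1}" .
  have B: "((\<lambda>x. (1/2) * (x powr (1/2 - 1) * (1 - x) powr (p + 1 - 1))) has_integral (1/2) * Beta (1/2) (p+1)) {0<..<1}"
    using has_integral_Beta_real[of "1/2" "p+1"] p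
    by (intro has_integral_mult_right) (simp add: has_integral_Icc_iff_Ioo)
  have "integral {0..1} f = Beta (1/2) (p+1) / 2"
    using has_integral_unique[OF A B] by simp
  then show ?thesis
    using integrable_continuous_real[OF fc] unfolding f_def
    by (metis has_integral_integrable_integral)
qed

lemma beta_fun_eq:
  fixes p :: real assumes p: "p > 0"
  shows "Beta_fun (1/2) (p+1) = Beta (1/2) (p+1)"
proof -
  define g where "g = (\<lambda>t::real. t powr (1/2 - 1) * (1 - t) powr (p + 1 - 1))"
  have hi: "(g has_integral Beta (1/2) (p+1)) {0<..<1}"
    using has_integral_Beta_real[of "1/2" "p+1"] p unfolding g_def
    by (simp add: has_integral_Icc_iff_Ioo)
  have "g absolutely_integrable_on {0<..<1}"
    by (rule nonnegative_absolutely_integrable_1) (use hi in \<open>auto simp: g_def\<close>)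
  then have "set_integrable lborel {0<..<1} g"
    unfolding set_integrable_def
    by (subst integrable_completion[symmetric]) (auto simp: g_def)
  then have "(LINT t:{0<..<1}|lborel. g t) = integral {0<..<1} g"
    by (rule set_borel_integral_eq_integral)
  also have "\<dots> = Beta (1/2) (p+1)" using hi by (rule integral_unique)
  finally show ?thesis unfolding Beta_fun_def g_def by simp
qed


theorem theorem7:
  fixes I J :: "real set" and h f f' f'' :: "real \<Rightarrow> real" and a b p q :: real
  assumes J: "is_interval J" "{0<..<1} \<subseteq> J"
      and h_nonneg: "\<forall>t\<in>J. 0 \<le> h t"
      and h_nz: "\<exists>t\<in>J. h t \<noteq> 0"
      and h_int: "set_integrable lborel {0<..<1} h"
      and I: "is_interval I" "I \<subseteq> {0..}"
      and ab: "a \<in> interior I" "b \<in> interior I" "a < b"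
      and f': "\<And>x. x \<in> interior I \<Longrightarrow> (f has_real_derivative f' x) (at x)"
      and f'': "\<And>x. x \<in> interior I \<Longrightarrow> (f' has_real_derivative f'' x) (at x)"
      and f''_int: "set_integrable lborel {a..b} f''"
      and q: "q > 1" and p: "p = q / (q - 1)"
      and hconv: "h_convex_on h {a..b} (\<lambda>x. \<bar>f'' x\<bar> powr q)"
  shows "\<bar>(f a + f b) / 2 - (1 / (b - a)) * (LBINT x=a..b. f x)\<bar>
    \<le> (b - a)^2 / (16 * 2 powr (1 / p)) * Beta_fun (1/2) (p + 1) powr (1 / p)
       * (LBINT t=0..1. h t) powr (1 / q)
       * ((\<bar>f'' a\<bar> powr q + \<bar>f'' ((a + b) / 2)\<bar> powr q) powr (1 / q)
          + (\<bar>f'' b\<bar> powr q + \<bar>f'' ((a + b) / 2)\<bar> powr q) powr (1 / q))"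
proof -
  define m where "m = (a + b) / 2"
  define d where "d = (b - a) / 2"
  have d0: "d > 0" using ab d_def by simp
  have am: "a = m - d" unfolding m_def d_def by (simp add: field_simps)
  have bm: "b = m + d" unfolding m_def d_def by (simp add: field_simps)
  have p0: "p > 0" using q p by simp
  have sub: "{a..b} \<subseteq> interior I"
  proof -
    have "convex (interior I)" using I(1) by (simp add: convex_interior is_interval_convex)
    then have "closed_segment a b \<subseteq> interior I" using ab by (simp add: convex_contains_segment)
    then show ?thesis using ab by (simp add: closed_segment_eq_real_ivl)
  qed
  define K where "K x = (x - a) * (b - x) / 2" for x
  define F where "F x = K x * f' x - (m - x) * f x" for x
  have FD: "(F has_real_derivative (K x * f'' x + f x)) (at x)" if x: "x \<in> {a..b}" for x
  proof -
    have x': "x \<in> interior I" using x sub by auto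
    show ?thesis unfolding F_def K_def
      by (rule derivative_eq_intros f'[OF x'] f''[OF x'] refl | simp add: m_def field_simps)+
  qed
  have fcont: "continuous_on {a..b} f"
    using f' sub by (intro continuous_at_imp_continuous_on) (meson DERIV_isCont subsetD)
  have FTC: "((\<lambda>x. K x * f'' x + f x) has_integral (F b - F a)) {a..b}"
    by (rule fundamental_theorem_of_calculus) (use ab FD in \<open>auto simp: has_real_derivative_iff_has_vector_derivative[symmetric] intro: has_field_derivative_at_within\<close>)
  have Fba: "F b - F a = d * (f a + f b)" unfolding F_def K_def m_def d_def by (simp add: field_simps)
  have hf: "(f has_integral integral {a..b} f) {a..b}"
    using integrable_continuous_real[OF fcont] by (simp add: has_integral_integral)
  have "((\<lambda>x. K x * f'' x + f x - f x) has_integral (F b - F a - integral {a..b} f)) {a..b}"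
    by (rule has_integral_diff[OF FTC hf])
  then have HK: "((\<lambda>x. K x * f'' x) has_integral (d * (f a + f b) - integral {a..b} f)) {a..b}"
    using Fba by simp
  have LB: "(LBINT x=a..b. f x) = integral {a..b} f"
    using ab borel_integrable_compact[OF compact_Icc fcont] by (intro interval_integral_eq_integral) (auto simp: set_integrable_def)
  define Iks where "Iks = integral {a..b} (\<lambda>x. K x * f'' x)"
  have Iks: "Iks = d * (f a + f b) - integral {a..b} f" using HK Iks_def by (simp add: integral_unique)
  have LHS: "(f a + f b) / 2 - (1 / (b - a)) * (LBINT x=a..b. f x) = Iks / (b - a)"
    unfolding LB Iks using d0 by (simp add: d_def field_simps)
  have f''_hk: "f'' integrable_on {a..b}" using set_borel_integral_eq_integral(1)[OF f''_int] .
  have f''_abs: "f'' absolutely_integrable_on {a..b}"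
    using set_borel_integral_eq_integral(1)[OF set_integrable_norm[OF f''_int]] f''_hk
    by (intro absolutely_integrable_onI) auto
  have Kc: "continuous_on {a..b} K" unfolding K_def by (intro continuous_intros) auto
  have Kf_abs: "(\<lambda>x. K x * f'' x) absolutely_integrable_on {a..b}"
  proof (rule absolutely_integrable_bounded_measurable_product_real[OF _ _ _ f''_abs])
    show "K \<in> borel_measurable (lebesgue_on {a..b})"
      by (rule continuous_imp_measurable_on_sets_lebesgue[OF Kc]) auto
    show "bounded (K ` {a..b})" by (rule compact_imp_bounded, rule compact_continuous_image[OF Kc]) auto
  qed auto
  define \<phi> where "\<phi> x = K x * \<bar>f'' x\<bar>" for x
  have K0: "K x \<ge> 0" if "x \<in> {a..b}" for x using that unfolding K_def by (intro divide_nonneg_pos mult_nonneg_nonneg) auto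
  have phi_int: "\<phi> integrable_on {a..b}"
  proof (rule integrable_eq)
    show "(\<lambda>x. norm (K x * f'' x)) integrable_on {a..b}"
      using absolutely_integrable_on_def[THEN iffD1, OF Kf_abs] by (rule conjunct2)
    show "norm (K x * f'' x) = \<phi> x" if "x \<in> {a..b}" for x
      using K0[OF that] by (simp add: \<phi>_def abs_mult)
  qed
  have Iks_le: "\<bar>Iks\<bar> \<le> integral {a..b} \<phi>"
  proof -
    have "norm (integral {a..b} (\<lambda>x. K x * f'' x)) \<le> integral {a..b} \<phi>"
    proof (rule integral_norm_bound_integral[OF _ phi_int])
      show "(\<lambda>x. K x * f'' x) integrable_on {a..b}" using HK by blast
      show "norm (K x * f'' x) \<le> \<phi> x" if "x \<in> {a..b}" for x
        using K0[OF that] by (simp add: \<phi>_def abs_mult)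
    qed
    then show ?thesis unfolding Iks_def by simp
  qed
  have split: "integral {a..b} \<phi> = integral {a..m} \<phi> + integral {m..b} \<phi>"
    using Henstock_Kurzweil_Integration.integral_combine[OF _ _ phi_int, of m] d0 am bm by simp
  have mab: "m \<in> {a..b}" using am bm d0 by auto
  have phiR: "(\<phi> has_integral integral {m..b} \<phi>) (cbox m b)"
    using integrable_subinterval_real[OF phi_int, of m b] mab by (simp add: integrable_integral)
  have "((\<lambda>s. \<phi> (d *\<^sub>R s + m)) has_integral (integral {m..b} \<phi> /\<^sub>R d ^ DIM(real)))
          (cbox ((m - m) /\<^sub>R d) ((b - m) /\<^sub>R d))"
    by (rule has_integral_affinity'[OF phiR d0])
  then have "((\<lambda>s. \<phi> (d * s + m)) has_integral (integral {m..b} \<phi> / d)) {0..1}"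
    using d0 bm by (simp add: divide_inverse mult.commute)
  also have "?this \<longleftrightarrow> ((\<lambda>s. (d^2/2) *\<^sub>R ((1 - s^2) * \<bar>f'' (s*b + (1-s)*m)\<bar>)) has_integral (integral {m..b} \<phi> / d)) {0..1}"
  proof (rule has_integral_cong)
    fix s :: real
    have e: "d * s + m = s*b + (1-s)*m" by (simp add: bm algebra_simps)
    show "\<phi> (d * s + m) = (d^2/2) *\<^sub>R ((1 - s^2) * \<bar>f'' (s*b + (1-s)*m)\<bar>)"
      unfolding \<phi>_def K_def e[symmetric] by (simp add: am bm power2_eq_square field_simps)
  qed
  finally have JbH: "((\<lambda>s. (1 - s^2) * \<bar>f'' (s*b + (1-s)*m)\<bar>) has_integral (integral {m..b} \<phi> / d) /\<^sub>R (d^2/2)) {0..1}"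
    using d0 by (subst (asm) has_integral_cmul_iff') auto
  have phiL: "(\<phi> has_integral integral {a..m} \<phi>) {a..m}"
    using integrable_subinterval_real[OF phi_int, of a m] mab by (simp add: integrable_integral)
  have "((\<lambda>x. \<phi> (-x)) has_integral integral {a..m} \<phi>) (cbox (-m) (-a))"
    using has_integral_reflect_real[of \<phi> "integral {a..m} \<phi>" m a, THEN iffD2, OF phiL] by simp
  from has_integral_affinity'[OF this d0, of "-m"]
  have "((\<lambda>s. \<phi> (- (d * s + - m))) has_integral (integral {a..m} \<phi> / d)) {0..1}"
    using d0 am by (simp add: divide_inverse mult.commute)
  also have "?this \<longleftrightarrow> ((\<lambda>s. (d^2/2) *\<^sub>R ((1 - s^2) * \<bar>f'' (s*a + (1-s)*m)\<bar>)) has_integral (integral {a..m} \<phi> / d)) {0..1}"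
  proof (rule has_integral_cong)
    fix s :: real
    have e: "- (d * s + - m) = s*a + (1-s)*m" by (simp add: am algebra_simps)
    show "\<phi> (- (d * s + - m)) = (d^2/2) *\<^sub>R ((1 - s^2) * \<bar>f'' (s*a + (1-s)*m)\<bar>)"
      unfolding \<phi>_def K_def e by (simp add: am bm power2_eq_square field_simps)
  qed
  finally have JaH: "((\<lambda>s. (1 - s^2) * \<bar>f'' (s*a + (1-s)*m)\<bar>) has_integral (integral {a..m} \<phi> / d) /\<^sub>R (d^2/2)) {0..1}"
    using d0 by (subst (asm) has_integral_cmul_iff') auto
  define H where "H = integral {0<..<1} h"
  have hH: "(h has_integral H) {0<..<1}"
    using set_borel_integral_eq_integral(1)[OF h_int] H_def by (simp add: integrable_integral)
  have LBh: "(LBINT t=0..1. h t) = H"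
    using interval_integral_eq_integral'[of 0 1 h] h_int H_def by (simp add: zero_ereal_def one_ereal_def)
  have h1: "((\<lambda>s. h (1 - s)) has_integral H) {0<..<1}"
  proof -
    have "(h has_integral H) {0..1}" using hH by (simp add: has_integral_Icc_iff_Ioo)
    then have "((\<lambda>x. h (-x)) has_integral H) {-1..-0}"
      by (rule has_integral_reflect_real[THEN iffD2])
    then have "((\<lambda>x. h (-x)) has_integral H) (cbox (-1) 0)" by simp
    from has_integral_affinity'[OF this, of 1 "-1"]
    have "((\<lambda>x. h (- (x + - 1))) has_integral H) {0..1}" by simp
    then show ?thesis by (simp add: has_integral_Icc_iff_Ioo)
  qed
  have hc: "\<And>x y t. x\<in>{a..b} \<Longrightarrow> y\<in>{a..b} \<Longrightarrow> t\<in>{0<..<1} \<Longrightarrow>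
      \<bar>f''(t*x+(1-t)*y)\<bar> powr q \<le> h t * \<bar>f'' x\<bar> powr q + h (1-t) * \<bar>f'' y\<bar> powr q"
    using hconv unfolding h_convex_on_def by blast
  have H0: "H \<ge> 0" unfolding H_def
  proof (rule integral_nonneg)
    show "h integrable_on {0<..<1}" using hH by blast
    show "0 \<le> h x" if "x \<in> {0<..<1}" for x using that J(2) h_nonneg by blast
  qed
  have Bpos: "Beta (1/2) (p+1) > 0" using p0 by (simp add: Beta_def Gamma_real_pos)
  have Xp: "((\<lambda>s. (1 - s^2) powr p) has_integral Beta (1/2) (p+1) / 2) {0<..<1}"
    using beta_sub[OF p0] by (simp add: has_integral_Icc_iff_Ioo)
  have HOLD: "integral {0..1} (\<lambda>s. (1 - s^2) * \<bar>f'' (s*e + (1-s)*m)\<bar>)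
      \<le> (Beta (1/2) (p+1) / 2) powr (1/p) * (H * \<bar>f'' e\<bar> powr q + H * \<bar>f'' m\<bar> powr q) powr (1/q)"
    if e: "e \<in> {a..b}" and int: "(\<lambda>s. (1 - s^2) * \<bar>f'' (s*e + (1-s)*m)\<bar>) integrable_on {0..1}" for e
  proof -
    define w where "w s = h s * \<bar>f'' e\<bar> powr q + h (1 - s) * \<bar>f'' m\<bar> powr q" for s
    have wH: "(w has_integral (H * \<bar>f'' e\<bar> powr q + H * \<bar>f'' m\<bar> powr q)) {0<..<1}"
      unfolding w_def by (rule has_integral_add[OF has_integral_mult_left[OF hH] has_integral_mult_left[OF h1]])
    have eq01: "integral {0..1} (\<lambda>s. (1 - s^2) * \<bar>f'' (s*e + (1-s)*m)\<bar>)
        = integral {0<..<1} (\<lambda>s. (1 - s^2) * \<bar>f'' (s*e + (1-s)*m)\<bar>)"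
      by (rule integral_unique[OF has_integral_Icc_iff_Ioo[THEN iffD1, OF integrable_integral[OF int]], symmetric])
    have "integral {0<..<1} (\<lambda>s. (1 - s^2) * \<bar>f'' (s*e + (1-s)*m)\<bar>)
      \<le> integral {0<..<1} (\<lambda>s. (1 - s^2) powr p) powr (1/p) * integral {0<..<1} w powr (1/q)"
    proof (rule holder_young[OF q p])
      show "(\<lambda>s. (1 - s^2) * \<bar>f'' (s*e + (1-s)*m)\<bar>) integrable_on {0<..<1}"
        using int by (simp add: integrable_on_Icc_iff_Ioo)
      show "(\<lambda>s. (1 - s^2) powr p) integrable_on {0<..<1}" using Xp by blast
      show "w integrable_on {0<..<1}" using wH by blast
      show "0 \<le> 1 - s^2" if "s \<in> {0<..<1}" for s :: real
        using that by (auto intro: power_le_one)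
      show "0 \<le> \<bar>f'' (s*e + (1-s)*m)\<bar>" for s by simp
      show "\<bar>f'' (s*e + (1-s)*m)\<bar> powr q \<le> w s" if s: "s \<in> {0<..<1}" for s
        using hc[OF e mab s] unfolding w_def by simp
      show "integral {0<..<1} (\<lambda>s. (1 - s^2) powr p) > 0"
        using integral_unique[OF Xp] Bpos by simp
    qed
    then show ?thesis
      using eq01 integral_unique[OF Xp] integral_unique[OF wH] by simp
  qed
  define Ja where "Ja = integral {0..1} (\<lambda>s. (1 - s^2) * \<bar>f'' (s*a + (1-s)*m)\<bar>)"
  define Jb where "Jb = integral {0..1} (\<lambda>s. (1 - s^2) * \<bar>f'' (s*b + (1-s)*m)\<bar>)"
  have Ja: "integral {a..m} \<phi> = d * (d^2/2) * Ja"
    using integral_unique[OF JaH] d0 unfolding Ja_def by (simp add: field_simps)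
  have Jb: "integral {m..b} \<phi> = d * (d^2/2) * Jb"
    using integral_unique[OF JbH] d0 unfolding Jb_def by (simp add: field_simps)
  define Ua where "Ua = \<bar>f'' a\<bar> powr q"
  define Ub where "Ub = \<bar>f'' b\<bar> powr q"
  define M where "M = \<bar>f'' m\<bar> powr q"
  define Bq where "Bq = (Beta (1/2) (p+1) / 2) powr (1/p)"
  have HJa: "Ja \<le> Bq * (H * Ua + H * M) powr (1/q)"
    using HOLD[OF _ has_integral_integrable[OF JaH]] ab(3) unfolding Ja_def Bq_def Ua_def M_def by simp
  have HJb: "Jb \<le> Bq * (H * Ub + H * M) powr (1/q)"
    using HOLD[OF _ has_integral_integrable[OF JbH]] ab(3) unfolding Jb_def Bq_def Ub_def M_def by simp
  have Bq0: "Bq \<ge> 0" unfolding Bq_def by simp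
  have LHS2: "\<bar>(f a + f b) / 2 - (1 / (b - a)) * (LBINT x=a..b. f x)\<bar> \<le> d^2/4 * (Ja + Jb)"
  proof -
    have "\<bar>Iks\<bar> \<le> d * (d^2/2) * (Ja + Jb)" using Iks_le split Ja Jb by (simp add: algebra_simps)
    moreover have "b - a = 2 * d" unfolding d_def by simp
    ultimately show ?thesis unfolding LHS using d0 by (simp add: abs_div field_simps power2_eq_square)
  qed
  also have "\<dots> \<le> d^2/4 * (Bq * (H * Ua + H * M) powr (1/q) + Bq * (H * Ub + H * M) powr (1/q))"
    using HJa HJb d0 by (intro mult_left_mono add_mono) auto
  also have "\<dots> = (b - a)^2 / (16 * 2 powr (1 / p)) * Beta_fun (1/2) (p + 1) powr (1 / p)
       * (LBINT t=0..1. h t) powr (1 / q)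
       * ((\<bar>f'' a\<bar> powr q + \<bar>f'' ((a + b) / 2)\<bar> powr q) powr (1 / q)
          + (\<bar>f'' b\<bar> powr q + \<bar>f'' ((a + b) / 2)\<bar> powr q) powr (1 / q))"
  proof -
    have e1: "Bq = Beta (1/2) (p+1) powr (1/p) / 2 powr (1/p)"
      unfolding Bq_def using Bpos by (simp add: powr_divide)
    have e2: "(H * U + H * M) powr (1/q) = H powr (1/q) * (U + M) powr (1/q)" if "U \<ge> 0" for U
      using H0 that M_def by (simp add: powr_mult flip: distrib_left)
    have Ua0: "Ua \<ge> 0" and Ub0: "Ub \<ge> 0" by (simp_all add: Ua_def Ub_def)
    have e3: "(b - a)^2 = 4 * d^2" unfolding d_def by (simp add: power2_eq_square field_simps)
    show ?thesis
      unfolding beta_fun_eq[OF p0] LBh m_def[symmetric] Ua_def[symmetric] Ub_def[symmetric] M_def[symmetric]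
        e1 e2[OF Ua0] e2[OF Ub0] e3
      by (simp add: field_simps)
  qed
  finally show ?thesis .
qed
end
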